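(* Let $n,k,N$ be positive integers, let $\Omega=(\omega_1,\dots,\omega_k)'$ be a probability vector and let $M=(\mu_{i,j})\in\mathbb{R}^{n\times k}$ be a matrix whose columns are probability vectors on $\{1,\dots,n\}$. Let $c_1,\dots,c_N$ be positive integers (document lengths) such that $\sum_{i=1}^N c_i>0$, $\sum_{i=1}^N c_i(c_i-1)>0$ and $\sum_{i=1}^N c_i(c_i-1)(c_i-2)>0$. Let $X^{(1)},\dots,X^{(N)}$ be $N$ documents generated independently according to the single topic model with parameters $(M,\Omega)$, document $i$ having $c_i$ words. Define: \begin{itemize} \item $\tilde M_1\in\mathbb{R}^n$ by $(\tilde M_1)_h=\dfrac{\sum_{i=1}^N (X^{(i)})_h}{\sum_{i=1}^N c_i}$; \item the symmetric matrix $\tilde M_2\in\mathbb{R}^{n\times n}$ by, for $h\neq l$, $(\tilde M_2)_{h,l}=\dfrac{\sum_{i=1}^N (X^{(i)})_h (X^{(i)})_l}{\sum_{i=1}^N (c_i-1)c_i}$ and $(\tilde M_2)_{h,h}=\dfrac{\sum_{i=1}^N (X^{(i)})_h((X^{(i)})_h-1)}{\sum_{i=1}^N (c_i-1)c_i}$; \item the symmetric tensor $\tilde M_3\in\mathbb{R}^{n\times n\times n}$ (invariant under permutation of its three indices) by, for pairwise distinct $h,l,m$, $(\tilde M_3)_{h,l,m}=\dfrac{\sum_{i=1}^N (X^{(i)})_h (X^{(i)})_l (X^{(i)})_m}{\sum_{i=1}^N (c_i-2)(c_i-1)c_i}$, for $h\neq l$, $(\tilde M_3)_{h,l,l}=\dfrac{\sum_{i=1}^N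 (X^{(i)})_h (X^{(i)})_l ((X^{(i)})_l-1)}{\sum_{i=1}^N (c_i-2)(c_i-1)c_i}$, and $(\tilde M_3)_{l,l,l}=\dfrac{\sum_{i=1}^N (X^{(i)})_l ((X^{(i)})_l-1)((X^{(i)})_l-2)}{\sum_{i=1}^N (c_i-2)(c_i-1)c_i}$. \end{itemize} Then for all $h,l,m\in\{1,\dots,n\}$: $\mathbb{E}[(\tilde M_1)_h]=\sum_{j=1}^k \omega_j\mu_{h,j}$, $\mathbb{E}[(\tilde M_2)_{h,l}]=\sum_{j=1}^k\omega_j\mu_{h,j}\mu_{l,j}$, and $\mathbb{E}[(\tilde M_3)_{h,l,m}]=\sum_{j=1}^k\omega_j\mu_{h,j}\mu_{l,j}\mu_{m,j}$.
   Context: Single topic model: for each document independently, a hidden topic $Y\in\{1,\dots,k\}$ is drawn with $\mathbb{P}(Y=j)=\omega_j$; given $Y=j$, each of the $c_i$ words of the document is drawn independently, word $h\in\{1,\dots,n\}$ having probability $\mu_{h,j}$. A word is encoded as the standard basis vector $e_h\in\mathbb{R}^n$, and $X^{(i)}\in\mathbb{R}^n$ is the sum of the encodings of the words of document $i$, i.e. $(X^{(i)})_h$ is the number of occurrences of word $h$ in document $i$. The lengths $c_i$ are fixed (non-random). *)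

theory Defs
  imports "HOL-Probability.Probability"
begin

(* Conventions: words are indexed 0..n-1, topics 0..k-1, documents 0..N-1.
   omega j = \<omega>_{j+1}; mu h j = \<mu>_{h+1,j+1}; c i = c_{i+1}. *)

definition topic_pmf :: "nat \<Rightarrow> (nat \<Rightarrow> real) \<Rightarrow> nat pmf" where
  "topic_pmf k omega = embed_pmf (\<lambda>j. if j < k then omega j else 0)"

definition word_pmf :: "nat \<Rightarrow> (nat \<Rightarrow> nat \<Rightarrow> real) \<Rightarrow> nat \<Rightarrow> nat pmf" where
  "word_pmf n mu j = embed_pmf (\<lambda>h. if h < n then mu h j else 0)"

definition doc_pmf :: "nat \<Rightarrow> nat \<Rightarrow> (nat \<Rightarrow> real) \<Rightarrow> (nat \<Rightarrow> nat \<Rightarrow> real) \<Rightarrow> nat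
    \<Rightarrow> (nat \<Rightarrow> nat) pmf" where
  "doc_pmf n k omega mu c =
     do { y \<leftarrow> topic_pmf k omega;
          ws \<leftarrow> Pi_pmf {..<c} 0 (\<lambda>_. word_pmf n mu y);
          return_pmf (\<lambda>h. card {t. t < c \<and> ws t = h}) }"

(* N independent documents, document i having c i words. X i h = (X^{(i+1)})_h. *)
definition corpus_pmf :: "nat \<Rightarrow> nat \<Rightarrow> (nat \<Rightarrow> real) \<Rightarrow> (nat \<Rightarrow> nat \<Rightarrow> real)
    \<Rightarrow> nat \<Rightarrow> (nat \<Rightarrow> nat) \<Rightarrow> (nat \<Rightarrow> nat \<Rightarrow> nat) pmf" where
  "corpus_pmf n k omega mu N c = Pi_pmf {..<N} (\<lambda>_. 0) (\<lambda>i. doc_pmf n k omega mu (c i))"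

definition M1 :: "nat \<Rightarrow> (nat \<Rightarrow> nat) \<Rightarrow> (nat \<Rightarrow> nat \<Rightarrow> nat) \<Rightarrow> nat \<Rightarrow> real" where
  "M1 N c X h = (\<Sum>i<N. real (X i h)) / (\<Sum>i<N. real (c i))"

definition M2 :: "nat \<Rightarrow> (nat \<Rightarrow> nat) \<Rightarrow> (nat \<Rightarrow> nat \<Rightarrow> nat) \<Rightarrow> nat \<Rightarrow> nat \<Rightarrow> real" where
  "M2 N c X h l =
     (if h \<noteq> l then (\<Sum>i<N. real (X i h) * real (X i l))
      else (\<Sum>i<N. real (X i h) * (real (X i h) - 1)))
     / (\<Sum>i<N. (real (c i) - 1) * real (c i))"

definition M3 :: "nat \<Rightarrow> (nat \<Rightarrow> nat) \<Rightarrow> (nat \<Rightarrow> nat \<Rightarrow> nat) \<Rightarrow> nat \<Rightarrow> nat \<Rightarrow> nat \<Rightarrow> real" where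
  "M3 N c X h l m =
     (if h = l \<and> l = m then
        (\<Sum>i<N. real (X i l) * (real (X i l) - 1) * (real (X i l) - 2))
      else if h = l then   \<comment> \<open>entry (l,l,m) = entry (m,l,l), m \<noteq> l\<close>
        (\<Sum>i<N. real (X i m) * real (X i l) * (real (X i l) - 1))
      else if l = m then   \<comment> \<open>entry (h,l,l), h \<noteq> l\<close>
        (\<Sum>i<N. real (X i h) * real (X i l) * (real (X i l) - 1))
      else if h = m then   \<comment> \<open>entry (h,l,h) = entry (l,h,h), l \<noteq> h\<close>
        (\<Sum>i<N. real (X i l) * real (X i h) * (real (X i h) - 1))
      else
        (\<Sum>i<N. real (X i h) * real (X i l) * real (X i m)))
     / (\<Sum>i<N. (real (c i) - 2) * (real (c i) - 1) * real (c i))"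

end

theory Submission imports Defs begin

lemma exp_bind_fin:
  fixes f :: "'b \<Rightarrow> real"
  assumes fp: "finite (set_pmf p)" and fq: "\<And>x. x \<in> set_pmf p \<Longrightarrow> finite (set_pmf (q x))"
  shows "measure_pmf.expectation (bind_pmf p q) f
       = measure_pmf.expectation p (\<lambda>x. measure_pmf.expectation (q x) f)"
proof -
  define A where "A = (\<Union>x\<in>set_pmf p. set_pmf (q x))"
  have fA: "finite A" using fp fq by (simp add: A_def)
  have pb: "pmf (bind_pmf p q) a = (\<Sum>x\<in>set_pmf p. pmf (q x) a * pmf p x)" for a
    unfolding pmf_bind by (rule integral_measure_pmf_real[OF fp])
  have "measure_pmf.expectation (bind_pmf p q) f = (\<Sum>a\<in>A. f a * pmf (bind_pmf p q) a)"
    by (rule integral_measure_pmf_real[OF fA]) (simp add: A_def set_bind_pmf)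
  also have "\<dots> = (\<Sum>a\<in>A. \<Sum>x\<in>set_pmf p. f a * pmf (q x) a * pmf p x)"
    by (simp only: pb sum_distrib_left mult.assoc)
  also have "\<dots> = (\<Sum>x\<in>set_pmf p. \<Sum>a\<in>A. f a * pmf (q x) a * pmf p x)"
    by (rule sum.swap)
  also have "\<dots> = (\<Sum>x\<in>set_pmf p. (\<Sum>a\<in>A. f a * pmf (q x) a) * pmf p x)"
    by (simp only: sum_distrib_right)
  also have "\<dots> = (\<Sum>x\<in>set_pmf p. measure_pmf.expectation (q x) f * pmf p x)"
  proof (rule sum.cong[OF refl])
    fix x assume x: "x \<in> set_pmf p"
    have "measure_pmf.expectation (q x) f = (\<Sum>a\<in>A. f a * pmf (q x) a)"
      by (rule integral_measure_pmf_real[OF fA]) (use x in \<open>auto simp: A_def\<close>)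
    then show "(\<Sum>a\<in>A. f a * pmf (q x) a) * pmf p x = measure_pmf.expectation (q x) f * pmf p x"
      by simp
  qed
  also have "\<dots> = measure_pmf.expectation p (\<lambda>x. measure_pmf.expectation (q x) f)"
    by (rule sym, rule integral_measure_pmf_real[OF fp])
  finally show ?thesis .
qed

lemma embed_ok:
  fixes f :: "nat \<Rightarrow> real"
  assumes "\<And>x. x < k \<Longrightarrow> f x \<ge> 0" "(\<Sum>x<k. f x) = 1"
  shows "(\<integral>\<^sup>+x. ennreal (if x < k then f x else 0) \<partial>count_space UNIV) = 1"
proof -
  have "(\<integral>\<^sup>+x. ennreal (if x < k then f x else 0) \<partial>count_space UNIV)
      = (\<integral>\<^sup>+x. ennreal (f x) * indicator {..<k} x \<partial>count_space UNIV)"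
    by (intro nn_integral_cong) (auto split: split_indicator)
  also have "\<dots> = (\<integral>\<^sup>+x. ennreal (f x) \<partial>count_space {..<k})"
    by (simp add: nn_integral_count_space_indicator)
  also have "\<dots> = (\<Sum>x<k. ennreal (f x))"
    by (simp add: nn_integral_count_space_finite)
  also have "\<dots> = ennreal (\<Sum>x<k. f x)"
    using assms(1) by (intro sum_ennreal) auto
  finally show ?thesis using assms(2) by simp
qed

lemma lin4:
  fixes f0 f1 f2 f3 :: "'a \<Rightarrow> real"
  assumes "finite (set_pmf p)"
  shows "measure_pmf.expectation p (\<lambda>x. f0 x + a1 * f1 x + a2 * f2 x + a3 * f3 x)
    = measure_pmf.expectation p f0 + a1 * measure_pmf.expectation p f1
      + a2 * measure_pmf.expectation p f2 + a3 * measure_pmf.expectation p f3"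
  using assms by (simp add: integrable_measure_pmf_finite)

lemma lin3:
  fixes f0 f1 f2 :: "'a \<Rightarrow> real"
  assumes "finite (set_pmf p)"
  shows "measure_pmf.expectation p (\<lambda>x. f0 x + a1 * f1 x + a2 * f2 x)
    = measure_pmf.expectation p f0 + a1 * measure_pmf.expectation p f1
      + a2 * measure_pmf.expectation p f2"
  using assms by (simp add: integrable_measure_pmf_finite)

lemma const_exp: "measure_pmf.expectation p (\<lambda>x. c::real) = c"
  by simp

lemma ind_exp: "measure_pmf.expectation p (\<lambda>y. if y = a then 1 else 0 :: real) = pmf p a"
  by (subst integral_measure_pmf_real[of "{a}"]) (auto split: if_splits)

lemma exp_pair_fin:
  fixes f :: "'a \<times> 'b \<Rightarrow> real"
  assumes "finite (set_pmf p)" "finite (set_pmf q)"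
  shows "measure_pmf.expectation (pair_pmf p q) f
       = measure_pmf.expectation p (\<lambda>x. measure_pmf.expectation q (\<lambda>y. f (x, y)))"
  unfolding pair_pmf_def using assms
  by (simp add: exp_bind_fin)



definition cnt :: "nat \<Rightarrow> (nat \<Rightarrow> nat) \<Rightarrow> nat \<Rightarrow> real" where
  "cnt c f a = real (card {t. t < c \<and> f t = a})"

definition P2 :: "(nat \<Rightarrow> real) \<Rightarrow> nat \<Rightarrow> nat \<Rightarrow> real" where
  "P2 x a b = x a * x b - (if a = b then x a else 0)"

definition P3 :: "(nat \<Rightarrow> real) \<Rightarrow> nat \<Rightarrow> nat \<Rightarrow> nat \<Rightarrow> real" where
  "P3 x a b d = x a * x b * x d - (if a = b then x a * x d else 0)
     - (if b = d then x a * x b else 0) - (if a = d then x a * x b else 0)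
     + (if a = b \<and> b = d then 2 * x a else 0)"

lemma cnt_Suc: "cnt (Suc c) (f(c:=y)) a = cnt c f a + (if y = a then 1 else 0)"
proof -
  define S where "S = {t. t < c \<and> f t = a}"
  have fS: "finite S" "c \<notin> S" by (auto simp: S_def)
  have "{t. t < Suc c \<and> (f(c:=y)) t = a} = (if y = a then insert c S else S)"
    by (auto simp: S_def less_Suc_eq)
  then show ?thesis using fS by (simp add: cnt_def S_def[symmetric])
qed

lemma cnt_0: "cnt 0 f a = 0" by (simp add: cnt_def)

lemma P2_upd: "P2 (\<lambda>a. x a + (if y = a then 1 else 0)) a b
   = P2 x a b + x a * (if y = b then 1 else 0) + (if y = a then 1 else 0) * x b"
  by (auto simp: P2_def algebra_simps)

lemma P3_upd: "P3 (\<lambda>a. x a + (if y = a then 1 else 0)) a b d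
   = P3 x a b d + (if y = a then 1 else 0) * P2 x b d + (if y = b then 1 else 0) * P2 x a d
     + (if y = d then 1 else 0) * P2 x a b"
  by (cases "a = b"; cases "b = d"; cases "a = d"; cases "y = a"; cases "y = b"; cases "y = d";
      simp add: P2_def P3_def algebra_simps)

lemma fin_Pi: "finite (set_pmf q) \<Longrightarrow> finite (set_pmf (Pi_pmf {..<c::nat} (0::nat) (\<lambda>_. q)))"
  by (subst set_Pi_pmf) (auto intro!: finite_PiE_dflt)

lemma moments:
  assumes fq: "finite (set_pmf q)"
  shows "(\<forall>a. measure_pmf.expectation (Pi_pmf {..<c} 0 (\<lambda>_. q)) (\<lambda>f. cnt c f a)
             = real c * pmf q a)
       \<and> (\<forall>a b. measure_pmf.expectation (Pi_pmf {..<c} 0 (\<lambda>_. q)) (\<lambda>f. P2 (cnt c f) a b)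
             = real c * (real c - 1) * pmf q a * pmf q b)
       \<and> (\<forall>a b d. measure_pmf.expectation (Pi_pmf {..<c} 0 (\<lambda>_. q)) (\<lambda>f. P3 (cnt c f) a b d)
             = real c * (real c - 1) * (real c - 2) * pmf q a * pmf q b * pmf q d)"
proof (induction c)
  case 0
  then show ?case by (simp add: cnt_0 P2_def P3_def)
next
  case (Suc c)
  let ?D = "Pi_pmf {..<c} (0::nat) (\<lambda>_. q)"
  have fin: "finite (set_pmf ?D)" using fin_Pi[OF fq] .
  have D: "Pi_pmf {..<Suc c} 0 (\<lambda>_. q) = map_pmf (\<lambda>(y,f). f(c:=y)) (pair_pmf q ?D)"
    by (simp add: lessThan_Suc Pi_pmf_insert)
  have step: "\<And>g::(nat \<Rightarrow> nat) \<Rightarrow> real. measure_pmf.expectation (Pi_pmf {..<Suc c} 0 (\<lambda>_. q)) g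
      = measure_pmf.expectation q (\<lambda>y. measure_pmf.expectation ?D (\<lambda>f. g (f(c:=y))))"
    unfolding D integral_map_pmf by (subst exp_pair_fin[OF fq fin]) simp
  have cS: "\<And>f y. cnt (Suc c) (f(c:=y)) = (\<lambda>a. cnt c f a + (if y = a then 1 else 0))"
    by (rule ext) (rule cnt_Suc)
  have IH1: "\<And>a. measure_pmf.expectation ?D (\<lambda>f. cnt c f a) = real c * pmf q a"
    and IH2: "\<And>a b. measure_pmf.expectation ?D (\<lambda>f. P2 (cnt c f) a b)
             = real c * (real c - 1) * pmf q a * pmf q b"
    and IH3: "\<And>a b d. measure_pmf.expectation ?D (\<lambda>f. P3 (cnt c f) a b d)
             = real c * (real c - 1) * (real c - 2) * pmf q a * pmf q b * pmf q d"
    using Suc.IH by auto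
  have E1: "measure_pmf.expectation (Pi_pmf {..<Suc c} 0 (\<lambda>_. q)) (\<lambda>f. cnt (Suc c) f a)
             = real (Suc c) * pmf q a" for a
  proof -
    have i: "measure_pmf.expectation ?D (\<lambda>f. cnt c f a + (if y = a then 1 else 0))
        = real c * pmf q a + (if y = a then 1 else 0)" for y
      using lin4[OF fin, of "\<lambda>f. cnt c f a" "if y = a then 1 else 0" "\<lambda>_. 1" 0 "\<lambda>_. 0" 0 "\<lambda>_. 0"]
      by (simp add: IH1)
    have "measure_pmf.expectation (Pi_pmf {..<Suc c} 0 (\<lambda>_. q)) (\<lambda>f. cnt (Suc c) f a)
      = measure_pmf.expectation q (\<lambda>y. real c * pmf q a + (if y = a then 1 else 0))"
      by (simp only: step cS i)
    also have "\<dots> = real c * pmf q a + pmf q a"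
      using lin4[OF fq, of "\<lambda>_. real c * pmf q a" 1 "\<lambda>y. if y = a then 1 else 0" 0 "\<lambda>_. 0" 0 "\<lambda>_. 0"]
      by (simp add: ind_exp)
    finally show ?thesis by (simp add: algebra_simps)
  qed
  have E2: "measure_pmf.expectation (Pi_pmf {..<Suc c} 0 (\<lambda>_. q)) (\<lambda>f. P2 (cnt (Suc c) f) a b)
             = real (Suc c) * (real (Suc c) - 1) * pmf q a * pmf q b" for a b
  proof -
    have i: "measure_pmf.expectation ?D (\<lambda>f. P2 (cnt c f) a b + (if y = b then 1 else 0) * cnt c f a
           + (if y = a then 1 else 0) * cnt c f b)
        = real c * (real c - 1) * pmf q a * pmf q b + (if y = b then 1 else 0) * (real c * pmf q a)
          + (if y = a then 1 else 0) * (real c * pmf q b)" for y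
      by (subst lin3[OF fin]) (simp only: IH1 IH2)
    have "measure_pmf.expectation (Pi_pmf {..<Suc c} 0 (\<lambda>_. q)) (\<lambda>f. P2 (cnt (Suc c) f) a b)
      = measure_pmf.expectation q (\<lambda>y. measure_pmf.expectation ?D (\<lambda>f. P2 (cnt c f) a b
           + (if y = b then 1 else 0) * cnt c f a + (if y = a then 1 else 0) * cnt c f b))"
      by (simp only: step cS P2_upd mult.commute[of "cnt c _ _"])
    also have "\<dots> = measure_pmf.expectation q (\<lambda>y. real c * (real c - 1) * pmf q a * pmf q b
          + (real c * pmf q a) * (if y = b then 1 else 0) + (real c * pmf q b) * (if y = a then 1 else 0))"
      unfolding i by (simp only: mult.commute[of "if _ then 1 else 0"])
    also have "\<dots> = real c * (real c - 1) * pmf q a * pmf q b + (real c * pmf q a) * pmf q b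
          + (real c * pmf q b) * pmf q a"
      by (subst lin3[OF fq]) (simp only: ind_exp const_exp)
    finally show ?thesis by (simp add: algebra_simps)
  qed
  have E3: "measure_pmf.expectation (Pi_pmf {..<Suc c} 0 (\<lambda>_. q)) (\<lambda>f. P3 (cnt (Suc c) f) a b d)
             = real (Suc c) * (real (Suc c) - 1) * (real (Suc c) - 2) * pmf q a * pmf q b * pmf q d" for a b d
  proof -
    have i: "measure_pmf.expectation ?D (\<lambda>f. P3 (cnt c f) a b d + (if y = a then 1 else 0) * P2 (cnt c f) b d
           + (if y = b then 1 else 0) * P2 (cnt c f) a d + (if y = d then 1 else 0) * P2 (cnt c f) a b)
        = real c * (real c - 1) * (real c - 2) * pmf q a * pmf q b * pmf q d
          + (if y = a then 1 else 0) * (real c * (real c - 1) * pmf q b * pmf q d)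
          + (if y = b then 1 else 0) * (real c * (real c - 1) * pmf q a * pmf q d)
          + (if y = d then 1 else 0) * (real c * (real c - 1) * pmf q a * pmf q b)" for y
      by (subst lin4[OF fin]) (simp only: IH2 IH3)
    have "measure_pmf.expectation (Pi_pmf {..<Suc c} 0 (\<lambda>_. q)) (\<lambda>f. P3 (cnt (Suc c) f) a b d)
      = measure_pmf.expectation q (\<lambda>y. real c * (real c - 1) * (real c - 2) * pmf q a * pmf q b * pmf q d
          + (real c * (real c - 1) * pmf q b * pmf q d) * (if y = a then 1 else 0)
          + (real c * (real c - 1) * pmf q a * pmf q d) * (if y = b then 1 else 0)
          + (real c * (real c - 1) * pmf q a * pmf q b) * (if y = d then 1 else 0))"
      unfolding step cS P3_upd i by (simp only: mult.commute[of "if _ then 1 else 0"])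
    also have "\<dots> = real c * (real c - 1) * (real c - 2) * pmf q a * pmf q b * pmf q d
          + (real c * (real c - 1) * pmf q b * pmf q d) * pmf q a
          + (real c * (real c - 1) * pmf q a * pmf q d) * pmf q b
          + (real c * (real c - 1) * pmf q a * pmf q b) * pmf q d"
      by (subst lin4[OF fq]) (simp only: ind_exp const_exp)
    finally show ?thesis by (simp add: algebra_simps)
  qed
  show ?case using E1 E2 E3 by blast
qed

lemma topic_pmf_eq:
  assumes "\<And>j. j < k \<Longrightarrow> omega j \<ge> 0" "(\<Sum>j<k. omega j) = 1"
  shows "pmf (topic_pmf k omega) j = (if j < k then omega j else 0)"
  unfolding topic_pmf_def
  by (rule pmf_embed_pmf) (use assms embed_ok[OF assms] in auto)

lemma topic_set:
  assumes "\<And>j. j < k \<Longrightarrow> omega j \<ge> 0" "(\<Sum>j<k. omega j) = 1"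
  shows "set_pmf (topic_pmf k omega) \<subseteq> {..<k}"
  by (auto simp: set_pmf_eq topic_pmf_eq[OF assms] split: if_splits)

lemma word_pmf_eq:
  assumes "\<And>h. h < n \<Longrightarrow> mu h j \<ge> 0" "(\<Sum>h<n. mu h j) = 1"
  shows "pmf (word_pmf n mu j) h = (if h < n then mu h j else 0)"
  unfolding word_pmf_def
  by (rule pmf_embed_pmf) (use assms embed_ok[of n "\<lambda>h. mu h j"] in auto)

lemma word_set:
  assumes "\<And>h. h < n \<Longrightarrow> mu h j \<ge> 0" "(\<Sum>h<n. mu h j) = 1"
  shows "set_pmf (word_pmf n mu j) \<subseteq> {..<n}"
  by (auto simp: set_pmf_eq word_pmf_eq[of n mu j, OF assms] split: if_splits)

lemma cnt_eta: "(\<lambda>h. real (card {t. t < c \<and> ws t = h})) = cnt c ws"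
  by (rule ext) (simp add: cnt_def)

locale stm =
  fixes n k :: nat and omega :: "nat \<Rightarrow> real" and mu :: "nat \<Rightarrow> nat \<Rightarrow> real"
  assumes om_nn: "\<And>j. j < k \<Longrightarrow> omega j \<ge> 0" and om_sum: "(\<Sum>j<k. omega j) = 1"
    and mu_nn: "\<And>h j. h < n \<Longrightarrow> j < k \<Longrightarrow> mu h j \<ge> 0"
    and mu_sum: "\<And>j. j < k \<Longrightarrow> (\<Sum>h<n. mu h j) = 1"
begin

lemma ts: "set_pmf (topic_pmf k omega) \<subseteq> {..<k}"
  by (rule topic_set) (simp_all add: om_nn om_sum)

lemma ft: "finite (set_pmf (topic_pmf k omega))"
  by (rule finite_subset[OF ts]) simp

lemma fwk:
  assumes "j < k" shows "finite (set_pmf (word_pmf n mu j))"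
proof -
  have "set_pmf (word_pmf n mu j) \<subseteq> {..<n}"
    by (rule word_set[of n mu j]) (simp_all add: mu_nn mu_sum assms)
  then show ?thesis by (rule finite_subset) simp
qed

lemma fw: "j \<in> set_pmf (topic_pmf k omega) \<Longrightarrow> finite (set_pmf (word_pmf n mu j))"
  using ts by (intro fwk) auto

lemma fD: "j \<in> set_pmf (topic_pmf k omega) \<Longrightarrow>
    finite (set_pmf (Pi_pmf {..<c::nat} 0 (\<lambda>_. word_pmf n mu j)))"
  by (rule fin_Pi[OF fw])

lemma fR: "j \<in> set_pmf (topic_pmf k omega) \<Longrightarrow>
    finite (set_pmf (Pi_pmf {..<c::nat} 0 (\<lambda>_. word_pmf n mu j) \<bind>
       (\<lambda>ws. return_pmf (\<lambda>h. card {t. t < c \<and> ws t = h}))))"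
  using fD[of j c] by simp

lemma doc_fin: "finite (set_pmf (doc_pmf n k omega mu c))"
  unfolding doc_pmf_def by (simp add: ft fD)

lemma doc_exp:
  fixes G :: "(nat \<Rightarrow> nat) \<Rightarrow> real"
  shows "measure_pmf.expectation (doc_pmf n k omega mu c) G
    = (\<Sum>j<k. omega j * measure_pmf.expectation (Pi_pmf {..<c} 0 (\<lambda>_. word_pmf n mu j))
          (\<lambda>ws. G (\<lambda>h. card {t. t < c \<and> ws t = h})))"
proof -
  have inner: "measure_pmf.expectation (Pi_pmf {..<c} 0 (\<lambda>_. word_pmf n mu j) \<bind>
       (\<lambda>ws. return_pmf (\<lambda>h. card {t. t < c \<and> ws t = h}))) G
     = measure_pmf.expectation (Pi_pmf {..<c} 0 (\<lambda>_. word_pmf n mu j))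
          (\<lambda>ws. G (\<lambda>h. card {t. t < c \<and> ws t = h}))"
    if "j \<in> set_pmf (topic_pmf k omega)" for j
    by (subst exp_bind_fin[OF fD[OF that]]) simp_all
  have "measure_pmf.expectation (doc_pmf n k omega mu c) G
     = measure_pmf.expectation (topic_pmf k omega) (\<lambda>j.
         measure_pmf.expectation (Pi_pmf {..<c} 0 (\<lambda>_. word_pmf n mu j) \<bind>
       (\<lambda>ws. return_pmf (\<lambda>h. card {t. t < c \<and> ws t = h}))) G)"
    unfolding doc_pmf_def by (rule exp_bind_fin[OF ft fR])
  also have "\<dots> = (\<Sum>j<k. measure_pmf.expectation (Pi_pmf {..<c} 0 (\<lambda>_. word_pmf n mu j) \<bind>
       (\<lambda>ws. return_pmf (\<lambda>h. card {t. t < c \<and> ws t = h}))) G * pmf (topic_pmf k omega) j)"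
    by (rule integral_measure_pmf_real) (use ts in auto)
  also have "\<dots> = (\<Sum>j<k. omega j * measure_pmf.expectation (Pi_pmf {..<c} 0 (\<lambda>_. word_pmf n mu j))
          (\<lambda>ws. G (\<lambda>h. card {t. t < c \<and> ws t = h})))"
  proof (rule sum.cong[OF refl])
    fix j assume j: "j \<in> {..<k}"
    show "measure_pmf.expectation (Pi_pmf {..<c} 0 (\<lambda>_. word_pmf n mu j) \<bind>
       (\<lambda>ws. return_pmf (\<lambda>h. card {t. t < c \<and> ws t = h}))) G * pmf (topic_pmf k omega) j
      = omega j * measure_pmf.expectation (Pi_pmf {..<c} 0 (\<lambda>_. word_pmf n mu j))
          (\<lambda>ws. G (\<lambda>h. card {t. t < c \<and> ws t = h}))"
    proof (cases "j \<in> set_pmf (topic_pmf k omega)")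
      case True
      then show ?thesis using j by (simp add: inner topic_pmf_eq[of k omega, OF om_nn om_sum])
    next
      case False
      then have "omega j = 0" using j by (simp add: set_pmf_eq topic_pmf_eq[of k omega, OF om_nn om_sum])
      then show ?thesis using False by (simp add: set_pmf_eq)
    qed
  qed
  finally show ?thesis .
qed

lemma wp: "j < k \<Longrightarrow> a < n \<Longrightarrow> pmf (word_pmf n mu j) a = mu a j"
  by (subst word_pmf_eq[of n mu j]) (simp_all add: mu_nn mu_sum)

lemma doc1: "a < n \<Longrightarrow> measure_pmf.expectation (doc_pmf n k omega mu c) (\<lambda>X. real (X a))
   = real c * (\<Sum>j<k. omega j * mu a j)"
proof -
  assume a: "a < n"
  have e: "omega j * measure_pmf.expectation (Pi_pmf {..<c} 0 (\<lambda>_. word_pmf n mu j)) (\<lambda>ws. cnt c ws a)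
      = real c * (omega j * mu a j)" if "j \<in> {..<k}" for j
    using moments[OF fwk[of j], of c] wp[of j a] that a by simp
  show ?thesis
    unfolding doc_exp by (simp add: cnt_def[symmetric] e sum_distrib_left)
qed

lemma doc2: "a < n \<Longrightarrow> b < n \<Longrightarrow>
   measure_pmf.expectation (doc_pmf n k omega mu c) (\<lambda>X. P2 (\<lambda>h. real (X h)) a b)
   = real c * (real c - 1) * (\<Sum>j<k. omega j * mu a j * mu b j)"
proof -
  assume a: "a < n" "b < n"
  have e: "omega j * measure_pmf.expectation (Pi_pmf {..<c} 0 (\<lambda>_. word_pmf n mu j)) (\<lambda>ws. P2 (cnt c ws) a b)
      = real c * (real c - 1) * (omega j * mu a j * mu b j)" if "j \<in> {..<k}" for j
    using moments[OF fwk[of j], of c] wp[of j a] wp[of j b] that a by simp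
  show ?thesis
    unfolding doc_exp cnt_eta by (simp add: e sum_distrib_left)
qed

lemma doc3: "a < n \<Longrightarrow> b < n \<Longrightarrow> d < n \<Longrightarrow>
   measure_pmf.expectation (doc_pmf n k omega mu c) (\<lambda>X. P3 (\<lambda>h. real (X h)) a b d)
   = real c * (real c - 1) * (real c - 2) * (\<Sum>j<k. omega j * mu a j * mu b j * mu d j)"
proof -
  assume a: "a < n" "b < n" "d < n"
  have e: "omega j * measure_pmf.expectation (Pi_pmf {..<c} 0 (\<lambda>_. word_pmf n mu j)) (\<lambda>ws. P3 (cnt c ws) a b d)
      = real c * (real c - 1) * (real c - 2) * (omega j * mu a j * mu b j * mu d j)" if "j \<in> {..<k}" for j
    using moments[OF fwk[of j], of c] wp[of j a] wp[of j b] wp[of j d] that a by simp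
  show ?thesis
    unfolding doc_exp cnt_eta by (simp add: e sum_distrib_left)
qed


lemma corpus_exp:
  fixes F :: "(nat \<Rightarrow> nat) \<Rightarrow> real" and S :: real
  shows "measure_pmf.expectation (corpus_pmf n k omega mu N c) (\<lambda>X. (\<Sum>i<N. F (X i)) / S)
     = (\<Sum>i<N. measure_pmf.expectation (doc_pmf n k omega mu (c i)) F) / S"
proof -
  have fC: "finite (set_pmf (corpus_pmf n k omega mu N c))"
    unfolding corpus_pmf_def by (subst set_Pi_pmf) (auto intro!: finite_PiE_dflt doc_fin)
  have comp: "measure_pmf.expectation (corpus_pmf n k omega mu N c) (\<lambda>X. F (X i))
      = measure_pmf.expectation (doc_pmf n k omega mu (c i)) F" if "i \<in> {..<N}" for i
  proof -
    have "map_pmf (\<lambda>X. X i) (corpus_pmf n k omega mu N c) = doc_pmf n k omega mu (c i)"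
      unfolding corpus_pmf_def using that by (subst Pi_pmf_component) auto
    then have "measure_pmf.expectation (doc_pmf n k omega mu (c i)) F
        = measure_pmf.expectation (map_pmf (\<lambda>X. X i) (corpus_pmf n k omega mu N c)) F" by simp
    then show ?thesis by simp
  qed
  have "measure_pmf.expectation (corpus_pmf n k omega mu N c) (\<lambda>X. (\<Sum>i<N. F (X i)) / S)
     = measure_pmf.expectation (corpus_pmf n k omega mu N c) (\<lambda>X. (\<Sum>i<N. F (X i))) / S"
    by (rule integral_divide_zero)
  also have "measure_pmf.expectation (corpus_pmf n k omega mu N c) (\<lambda>X. (\<Sum>i<N. F (X i)))
     = (\<Sum>i<N. measure_pmf.expectation (corpus_pmf n k omega mu N c) (\<lambda>X. F (X i)))"
    by (rule Bochner_Integration.integral_sum[where I="{..<N}" and M="measure_pmf (corpus_pmf n k omega mu N c)" and f="\<lambda>i X. F (X i)"], rule integrable_measure_pmf_finite[OF fC])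
  also have "\<dots> = (\<Sum>i<N. measure_pmf.expectation (doc_pmf n k omega mu (c i)) F)"
    by (rule sum.cong[OF refl]) (rule comp)
  finally show ?thesis .
qed

end

lemma M2_eq: "M2 N c X h l = (\<Sum>i<N. P2 (\<lambda>a. real (X i a)) h l) / (\<Sum>i<N. (real (c i) - 1) * real (c i))"
  by (cases "h = l") (simp_all add: M2_def P2_def algebra_simps)

lemma M3_eq: "M3 N c X h l m = (\<Sum>i<N. P3 (\<lambda>a. real (X i a)) h l m)
    / (\<Sum>i<N. (real (c i) - 2) * (real (c i) - 1) * real (c i))"
  by (cases "h = l"; cases "l = m"; cases "h = m") (simp_all add: M3_def P3_def algebra_simps)

theorem theorem2p1:
  fixes n k N :: nat and omega :: "nat \<Rightarrow> real" and mu :: "nat \<Rightarrow> nat \<Rightarrow> real"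
    and c :: "nat \<Rightarrow> nat"
  assumes "n \<ge> 1" and "k \<ge> 1" and "N \<ge> 1"
    and "\<And>j. j < k \<Longrightarrow> omega j \<ge> 0" and "(\<Sum>j<k. omega j) = 1"
    and "\<And>h j. h < n \<Longrightarrow> j < k \<Longrightarrow> mu h j \<ge> 0"
    and "\<And>j. j < k \<Longrightarrow> (\<Sum>h<n. mu h j) = 1"
    and "\<And>i. i < N \<Longrightarrow> c i \<ge> 1"
    and "(\<Sum>i<N. real (c i)) > 0"
    and "(\<Sum>i<N. real (c i) * (real (c i) - 1)) > 0"
    and "(\<Sum>i<N. real (c i) * (real (c i) - 1) * (real (c i) - 2)) > 0"
  shows "\<forall>h<n. \<forall>l<n. \<forall>m<n.
     measure_pmf.expectation (corpus_pmf n k omega mu N c) (\<lambda>X. M1 N c X h)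
       = (\<Sum>j<k. omega j * mu h j)
   \<and> measure_pmf.expectation (corpus_pmf n k omega mu N c) (\<lambda>X. M2 N c X h l)
       = (\<Sum>j<k. omega j * mu h j * mu l j)
   \<and> measure_pmf.expectation (corpus_pmf n k omega mu N c) (\<lambda>X. M3 N c X h l m)
       = (\<Sum>j<k. omega j * mu h j * mu l j * mu m j)"
proof (intro allI impI conjI)
  interpret stm n k omega mu
    by unfold_locales (use assms in auto)
  fix h l m assume h: "h < n" and l: "l < n" and m: "m < n"
  have S1: "(\<Sum>i<N. real (c i)) \<noteq> 0" using assms(9) by simp
  have S2: "(\<Sum>i<N. (real (c i) - 1) * real (c i)) \<noteq> 0"
    using assms(10) by (simp add: mult.commute)
  have S3: "(\<Sum>i<N. (real (c i) - 2) * (real (c i) - 1) * real (c i)) \<noteq> 0"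
  proof -
    have "(\<Sum>i<N. (real (c i) - 2) * (real (c i) - 1) * real (c i))
        = (\<Sum>i<N. real (c i) * (real (c i) - 1) * (real (c i) - 2))"
      by (rule sum.cong[OF refl]) (simp only: mult.commute mult.left_commute)
    then show ?thesis using assms(11) by simp
  qed
  have d1: "(\<Sum>i<N. measure_pmf.expectation (doc_pmf n k omega mu (c i)) (\<lambda>X. real (X h)))
      = (\<Sum>i<N. real (c i)) * (\<Sum>j<k. omega j * mu h j)"
    by (simp only: doc1[OF h] sum_distrib_right)
  show "measure_pmf.expectation (corpus_pmf n k omega mu N c) (\<lambda>X. M1 N c X h)
       = (\<Sum>j<k. omega j * mu h j)"
  proof -
    have "measure_pmf.expectation (corpus_pmf n k omega mu N c) (\<lambda>X. M1 N c X h)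
      = (\<Sum>i<N. measure_pmf.expectation (doc_pmf n k omega mu (c i)) (\<lambda>X. real (X h))) / (\<Sum>i<N. real (c i))"
      unfolding M1_def by (rule corpus_exp)
    then show ?thesis using S1 d1 by simp
  qed
  have d2: "(\<Sum>i<N. measure_pmf.expectation (doc_pmf n k omega mu (c i)) (\<lambda>X. P2 (\<lambda>a. real (X a)) h l))
      = (\<Sum>i<N. (real (c i) - 1) * real (c i)) * (\<Sum>j<k. omega j * mu h j * mu l j)"
    by (simp only: doc2[OF h l] sum_distrib_right mult.commute[of "real (c _) - 1"])
  show "measure_pmf.expectation (corpus_pmf n k omega mu N c) (\<lambda>X. M2 N c X h l)
       = (\<Sum>j<k. omega j * mu h j * mu l j)"
  proof -
    have "measure_pmf.expectation (corpus_pmf n k omega mu N c) (\<lambda>X. M2 N c X h l)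
      = (\<Sum>i<N. measure_pmf.expectation (doc_pmf n k omega mu (c i)) (\<lambda>X. P2 (\<lambda>a. real (X a)) h l))
        / (\<Sum>i<N. (real (c i) - 1) * real (c i))"
      unfolding M2_eq by (rule corpus_exp)
    then show ?thesis using S2 d2 by simp
  qed
  have c3: "real (c i) * (real (c i) - 1) * (real (c i) - 2) = (real (c i) - 2) * (real (c i) - 1) * real (c i)" for i
    by (simp only: mult.commute mult.left_commute)
  have d3: "(\<Sum>i<N. measure_pmf.expectation (doc_pmf n k omega mu (c i)) (\<lambda>X. P3 (\<lambda>a. real (X a)) h l m))
      = (\<Sum>i<N. (real (c i) - 2) * (real (c i) - 1) * real (c i)) * (\<Sum>j<k. omega j * mu h j * mu l j * mu m j)"
    by (simp only: doc3[OF h l m] sum_distrib_right c3)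
  show "measure_pmf.expectation (corpus_pmf n k omega mu N c) (\<lambda>X. M3 N c X h l m)
       = (\<Sum>j<k. omega j * mu h j * mu l j * mu m j)"
  proof -
    have "measure_pmf.expectation (corpus_pmf n k omega mu N c) (\<lambda>X. M3 N c X h l m)
      = (\<Sum>i<N. measure_pmf.expectation (doc_pmf n k omega mu (c i)) (\<lambda>X. P3 (\<lambda>a. real (X a)) h l m))
        / (\<Sum>i<N. (real (c i) - 2) * (real (c i) - 1) * real (c i))"
      unfolding M3_eq by (rule corpus_exp)
    then show ?thesis using S3 d3 by simp
  qed
qed

end
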